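(* Let $\iota:\mathrm{Aut}(T,\mathbf r)\to\mathrm S_n$ send an automorphism $f$ to the permutation of $\underline n$ which, for each leaf $(1,L)$, maps $L$ onto $L'$, where $f(1,L)=(1,L')$, by the unique order-preserving bijection. Then $\iota$ is an injective group morphism into $\operatorname{Stab}_{W_{\mathfrak g}}(\mathbf U)$ whose image meets $W_{\mathfrak h_1}$ trivially and normalises it, and the resulting injective group morphism $$\mathrm{Aut}(T,\mathbf r)\ltimes W_{\mathfrak h_1}\to\operatorname{Stab}_{W_{\mathfrak g}}(\mathbf U),\qquad (f,w)\mapsto\iota(f)\,w,$$ is surjective.
   Context: Let $n\ge2$, $\mathfrak g=\mathfrak{sl}_n(\mathbb C)$, $\mathfrak t=\{x\in\mathbb C^n:\sum x_a=0\}$, $W_{\mathfrak g}=\mathrm S_n$ permuting coordinates. Fix $p\ge1$, $A_1,\dots,A_p\in\mathfrak t$. For $l\in\{1,\dots,p+1\}$ let $P_l$ be the partition of $\underline n=\{1,\dots,n\}$ in which $a,b$ lie in the same part iff $(A_j)_a=(A_j)_b$ for all $l\le j\le p$ ($P_{p+1}=\{\underline n\}$). $W_{\mathfrak h_1}=\prod_{L\in P_1}\mathrm S_L\subseteq\mathrm S_n$. $U_l=\{x\in\mathfrak t:x_a=x_b$ whenever $a,b$ in the same part of $P_l\}$, and $\operatorname{Stab}_{W_{\mathfrak g}}(\mathbf U)=\{w\in\mathrm S_n:w(U_l)\subseteq U_l\ \forall l\le p\}$ (the paper also denotes this group $\widetilde{\mathrm{Aut}}(T,\mathbf r)$). Ranked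 fission tree $(T,\mathbf r)$: nodes are pairs $(l,L)$, $L$ a part of $P_l$; root $(p+1,\underline n)$; parent of $(l,L)$ is $(l+1,L')$ with $L\subseteq L'\in P_{l+1}$; rank $\mathbf r(l,L)=|L|$. $\mathrm{Aut}(T,\mathbf r)$ is the group of bijections of the node set fixing the root, commuting with the parent map and preserving ranks. The semidirect product uses the action of $\mathrm{Aut}(T,\mathbf r)$ on $W_{\mathfrak h_1}$ by conjugation through $\iota$. *)

theory Defs
  imports "HOL-Algebra.Sym_Groups" Complex_Main
begin

text \<open>Data: n, p, and A :: nat => nat => complex, where A j is the vector A_j
 (coordinates indexed by 1..n). Everything below is parametrised by n p A.\<close>

text \<open>The Cartan subalgebra t of sl_n: vectors on {1..n} (zero outside) with coordinate sum 0.\<close>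
definition tspace :: "nat \<Rightarrow> (nat \<Rightarrow> complex) set" where
  "tspace n = {x. (\<forall>a. a \<notin> {1..n} \<longrightarrow> x a = 0) \<and> (\<Sum>a=1..n. x a) = 0}"

definition lev_rel :: "nat \<Rightarrow> nat \<Rightarrow> (nat \<Rightarrow> nat \<Rightarrow> complex) \<Rightarrow> nat \<Rightarrow> (nat \<times> nat) set" where
  "lev_rel n p A l = {(a,b). a \<in> {1..n} \<and> b \<in> {1..n} \<and> (\<forall>j\<in>{l..p}. A j a = A j b)}"

definition part :: "nat \<Rightarrow> nat \<Rightarrow> (nat \<Rightarrow> nat \<Rightarrow> complex) \<Rightarrow> nat \<Rightarrow> nat set set" where
  "part n p A l = {1..n} // lev_rel n p A l"

definition tree_nodes :: "nat \<Rightarrow> nat \<Rightarrow> (nat \<Rightarrow> nat \<Rightarrow> complex) \<Rightarrow> (nat \<times> nat set) set" where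
  "tree_nodes n p A = {(l, L). l \<in> {1..p+1} \<and> L \<in> part n p A l}"

definition tree_root :: "nat \<Rightarrow> nat \<Rightarrow> nat \<times> nat set" where
  "tree_root n p = (p + 1, {1..n})"

definition tree_parent :: "nat \<Rightarrow> nat \<Rightarrow> (nat \<Rightarrow> nat \<Rightarrow> complex) \<Rightarrow> nat \<times> nat set \<Rightarrow> nat \<times> nat set" where
  "tree_parent n p A x = (fst x + 1, THE L'. L' \<in> part n p A (fst x + 1) \<and> snd x \<subseteq> L')"

definition tree_rank :: "nat \<times> nat set \<Rightarrow> nat" where
  "tree_rank x = card (snd x)"

definition tree_aut :: "nat \<Rightarrow> nat \<Rightarrow> (nat \<Rightarrow> nat \<Rightarrow> complex) \<Rightarrow> (nat \<times> nat set \<Rightarrow> nat \<times> nat set) set" where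
  "tree_aut n p A = {f. f permutes tree_nodes n p A \<and> f (tree_root n p) = tree_root n p \<and>
      (\<forall>x \<in> tree_nodes n p A - {tree_root n p}. tree_parent n p A (f x) = f (tree_parent n p A x)) \<and>
      (\<forall>x \<in> tree_nodes n p A. tree_rank (f x) = tree_rank x)}"

definition aut_group :: "nat \<Rightarrow> nat \<Rightarrow> (nat \<Rightarrow> nat \<Rightarrow> complex) \<Rightarrow> (nat \<times> nat set \<Rightarrow> nat \<times> nat set) monoid" where
  "aut_group n p A = \<lparr>carrier = tree_aut n p A, mult = (\<circ>), one = id\<rparr>"

text \<open>The unique order-preserving bijection L \<rightarrow> L' (finite sets of naturals of equal size),
 evaluated at a \<in> L: send the k-th smallest element of L to the k-th smallest of L'.\<close>
definition order_bij :: "nat set \<Rightarrow> nat set \<Rightarrow> nat \<Rightarrow> nat" where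
  "order_bij L L' a = sorted_list_of_set L' ! card {b \<in> L. b < a}"

definition leaf_part :: "nat \<Rightarrow> nat \<Rightarrow> (nat \<Rightarrow> nat \<Rightarrow> complex) \<Rightarrow> nat \<Rightarrow> nat set" where
  "leaf_part n p A a = (THE L. L \<in> part n p A 1 \<and> a \<in> L)"

definition iota :: "nat \<Rightarrow> nat \<Rightarrow> (nat \<Rightarrow> nat \<Rightarrow> complex) \<Rightarrow> (nat \<times> nat set \<Rightarrow> nat \<times> nat set) \<Rightarrow> nat \<Rightarrow> nat" where
  "iota n p A f = (\<lambda>a. if a \<in> {1..n}
      then order_bij (leaf_part n p A a) (snd (f (1, leaf_part n p A a))) a else a)"

definition Uspace :: "nat \<Rightarrow> nat \<Rightarrow> (nat \<Rightarrow> nat \<Rightarrow> complex) \<Rightarrow> nat \<Rightarrow> (nat \<Rightarrow> complex) set" where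
  "Uspace n p A l = {x \<in> tspace n. \<forall>L \<in> part n p A l. \<forall>a\<in>L. \<forall>b\<in>L. x a = x b}"

definition perm_act :: "(nat \<Rightarrow> nat) \<Rightarrow> (nat \<Rightarrow> complex) \<Rightarrow> (nat \<Rightarrow> complex)" where
  "perm_act w x = x \<circ> inv_into UNIV w"

definition stabU :: "nat \<Rightarrow> nat \<Rightarrow> (nat \<Rightarrow> nat \<Rightarrow> complex) \<Rightarrow> (nat \<Rightarrow> nat) set" where
  "stabU n p A = {w. w permutes {1..n} \<and> (\<forall>l \<in> {1..p}. perm_act w ` Uspace n p A l \<subseteq> Uspace n p A l)}"

text \<open>W_{h_1} = product of S_L over L \<in> P_1.\<close>
definition Wh1 :: "nat \<Rightarrow> nat \<Rightarrow> (nat \<Rightarrow> nat \<Rightarrow> complex) \<Rightarrow> (nat \<Rightarrow> nat) set" where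
  "Wh1 n p A = {w. w permutes {1..n} \<and> (\<forall>L \<in> part n p A 1. w ` L \<subseteq> L)}"

text \<open>Semidirect product Aut(T,r) \<ltimes> W_{h_1}, pairs (f,w) standing for iota(f) w:
 (f,w)(f',w') = (f f', (iota(f')^{-1} w iota(f')) w').\<close>
definition semidirect :: "nat \<Rightarrow> nat \<Rightarrow> (nat \<Rightarrow> nat \<Rightarrow> complex)
     \<Rightarrow> ((nat \<times> nat set \<Rightarrow> nat \<times> nat set) \<times> (nat \<Rightarrow> nat)) monoid" where
  "semidirect n p A = \<lparr>carrier = tree_aut n p A \<times> Wh1 n p A,
     mult = (\<lambda>(f, w) (f', w'). (f \<circ> f', (inv_into UNIV (iota n p A f') \<circ> w \<circ> iota n p A f') \<circ> w')),
     one = (id, id)\<rparr>"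

definition semidirect_map :: "nat \<Rightarrow> nat \<Rightarrow> (nat \<Rightarrow> nat \<Rightarrow> complex)
     \<Rightarrow> (nat \<times> nat set \<Rightarrow> nat \<times> nat set) \<times> (nat \<Rightarrow> nat) \<Rightarrow> nat \<Rightarrow> nat" where
  "semidirect_map n p A fw = iota n p A (fst fw) \<circ> snd fw"

end

theory Submission
  imports Defs
begin


lemma idx_take: assumes "sorted_wrt (<) (xs::nat list)" "i < length xs"
  shows "{b \<in> set xs. b < xs!i} = set (take i xs)"
proof
  show "set (take i xs) \<subseteq> {b \<in> set xs. b < xs!i}"
    using assms by (auto simp: in_set_conv_nth sorted_wrt_iff_nth_less dest: set_take_subset[THEN subsetD])
  show "{b \<in> set xs. b < xs!i} \<subseteq> set (take i xs)"
  proof clarify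
    fix b assume "b \<in> set xs" "b < xs!i"
    then obtain j where j: "j < length xs" "b = xs!j" by (auto simp: in_set_conv_nth)
    have "j < i"
    proof (rule ccontr)
      assume "\<not> j < i"
      then have "xs!i \<le> xs!j" using assms j sorted_wrt_iff_nth_less
        by (metis le_less linorder_not_less)
      then show False using \<open>b < xs!i\<close> j by simp
    qed
    then show "b \<in> set (take i xs)" using j by (auto simp: in_set_conv_nth)
  qed
qed

lemma card_idx: fixes L :: "nat set" assumes "finite L" "i < card L"
  shows "card {b \<in> L. b < sorted_list_of_set L ! i} = i"
proof -
  let ?xs = "sorted_list_of_set L"
  have "{b \<in> L. b < ?xs ! i} = set (take i ?xs)"
    using idx_take[of ?xs i] assms by simp
  moreover have "distinct (take i ?xs)" by simp
  ultimately show ?thesis using assms by (simp add: distinct_card)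
qed

lemma idx_lt: fixes L :: "nat set" assumes "finite L" "a \<in> L" shows "card {b \<in> L. b < a} < card L"
  using assms by (intro psubset_card_mono) auto

lemma nth_idx: fixes L :: "nat set" assumes "finite L" "a \<in> L"
  shows "sorted_list_of_set L ! card {b \<in> L. b < a} = a"
proof -
  let ?xs = "sorted_list_of_set L"
  obtain i where i: "i < length ?xs" "a = ?xs ! i" using assms
    by (metis in_set_conv_nth set_sorted_list_of_set)
  then show ?thesis using card_idx[of L i] assms by simp
qed

lemma order_bij_mem: assumes "finite L" "card L = card L'" "a \<in> L" "finite L'"
  shows "order_bij L L' a \<in> L'"
proof -
  have "card {b \<in> L. b < a} < length (sorted_list_of_set L')"
    using idx_lt[OF assms(1,3)] assms(2) by simp
  then show ?thesis unfolding order_bij_def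
    using nth_mem assms(4) by (metis set_sorted_list_of_set)
qed

lemma order_bij_id: assumes "finite L" "a \<in> L" shows "order_bij L L a = a"
  unfolding order_bij_def using nth_idx[OF assms] .

lemma order_bij_comp: assumes "finite L" "finite L'" "card L = card L'" "a \<in> L"
  shows "order_bij L' L'' (order_bij L L' a) = order_bij L L'' a"
proof -
  have "card {b \<in> L. b < a} < card L'" using idx_lt[OF assms(1,4)] assms(3) by simp
  then show ?thesis unfolding order_bij_def using card_idx[OF assms(2)] by simp
qed

lemma order_bij_inj: assumes "finite L" "finite L'" "card L = card L'" "a \<in> L" "b \<in> L"
  "order_bij L L' a = order_bij L L' b" shows "a = b"
proof -
  have "order_bij L' L (order_bij L L' a) = order_bij L' L (order_bij L L' b)" using assms(6) by simp
  then show ?thesis using order_bij_comp[OF assms(1-3), of _ L] order_bij_id[OF assms(1)] assms(4,5)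
    by simp
qed



locale fs =
  fixes n p :: nat and A :: "nat \<Rightarrow> nat \<Rightarrow> complex"
  assumes n2: "n \<ge> 2" and p1: "p \<ge> 1"
begin

abbreviation "R \<equiv> lev_rel n p A"
abbreviation "P \<equiv> part n p A"
abbreviation "N \<equiv> tree_nodes n p A"
abbreviation "I \<equiv> iota n p A"
abbreviation "par \<equiv> tree_parent n p A"
abbreviation "rt \<equiv> tree_root n p"
abbreviation "Aut \<equiv> tree_aut n p A"

lemma equivR: "equiv {1..n} (R l)"
  unfolding lev_rel_def equiv_def refl_on_def sym_def trans_def by auto

lemma R_mono: "l \<le> l' \<Longrightarrow> R l \<subseteq> R l'"
  unfolding lev_rel_def by auto

lemma blk_in: "a \<in> {1..n} \<Longrightarrow> R l``{a} \<in> P l"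
  unfolding part_def by (rule quotientI)

lemma blk_self: "a \<in> {1..n} \<Longrightarrow> a \<in> R l``{a}"
  unfolding lev_rel_def by auto

lemma block_eq: assumes "M \<in> P l" "a \<in> M" shows "M = R l``{a}"
proof -
  obtain x where x: "x \<in> {1..n}" "M = R l``{x}" using assms(1) unfolding part_def by (auto elim: quotientE)
  then show ?thesis using assms(2) equivR by (metis equiv_class_eq_iff Image_singleton_iff)
qed

lemma block_sub: "M \<in> P l \<Longrightarrow> M \<subseteq> {1..n}"
  unfolding part_def using equivR by (meson in_quotient_imp_subset)

lemma block_ne: "M \<in> P l \<Longrightarrow> M \<noteq> {}"
  unfolding part_def using equivR by (meson in_quotient_imp_non_empty)

lemma block_fin: "M \<in> P l \<Longrightarrow> finite M"
  using block_sub finite_subset by blast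

lemma blocks_disj: "M \<in> P l \<Longrightarrow> M' \<in> P l \<Longrightarrow> a \<in> M \<Longrightarrow> a \<in> M' \<Longrightarrow> M = M'"
  using block_eq by metis

lemma refine: assumes "M \<in> P l" "l \<le> l'" "M' \<in> P l'" "a \<in> M" "a \<in> M'" shows "M \<subseteq> M'"
  using block_eq[OF assms(1,4)] block_eq[OF assms(3,5)] R_mono[OF assms(2)] by auto

lemma P_top: "P (p+1) = {{1..n}}"
proof -
  have "R (p+1) = {1..n} \<times> {1..n}" unfolding lev_rel_def by auto
  moreover have "(1::nat) \<in> {1..n}" using n2 by auto
  ultimately show ?thesis unfolding part_def quotient_def by auto
qed

lemma parent_eq: assumes "L \<in> P l" "a \<in> L"
  shows "par (l,L) = (l+1, R(l+1)``{a})"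
proof -
  have a: "a \<in> {1..n}" using block_sub assms by blast
  have "(THE L'. L' \<in> P (l+1) \<and> L \<subseteq> L') = R(l+1)``{a}"
  proof (rule the_equality)
    show "R (l + 1) `` {a} \<in> P (l + 1) \<and> L \<subseteq> R (l + 1) `` {a}"
      using blk_in[OF a] refine[OF assms(1) _ blk_in[OF a] assms(2) blk_self[OF a], of "l+1"] by auto
    show "\<And>L'. L' \<in> P (l + 1) \<and> L \<subseteq> L' \<Longrightarrow> L' = R (l + 1) `` {a}"
      using block_eq assms(2) by blast
  qed
  then show ?thesis unfolding tree_parent_def by simp
qed

lemma leaf_eq: assumes "a \<in> {1..n}" shows "leaf_part n p A a = R 1``{a}"
  unfolding leaf_part_def
  using blk_in[OF assms] blk_self[OF assms] block_eq by (intro the_equality) auto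

lemma nodes_iff: "(l,L) \<in> N \<longleftrightarrow> 1 \<le> l \<and> l \<le> p+1 \<and> L \<in> P l"
  unfolding tree_nodes_def by auto

lemma rt_node: "rt \<in> N"
  unfolding tree_root_def nodes_iff using P_top by auto

lemma nonrt: "(l,L) \<in> N \<Longrightarrow> (l,L) \<noteq> rt \<Longrightarrow> l \<le> p"
  unfolding nodes_iff tree_root_def using P_top by (cases "l = p+1") auto

lemma fin_N: "finite N"
proof -
  have "N \<subseteq> {1..p+1} \<times> Pow {1..n}" unfolding tree_nodes_def using block_sub by auto
  then show ?thesis by (rule finite_subset) auto
qed

lemma fst_par: "fst (par x) = fst x + 1"
  unfolding tree_parent_def by simp

end

context fs begin

lemma autD: assumes "f \<in> Aut"
  shows "f permutes N" "f rt = rt" "\<And>x. x \<in> N \<Longrightarrow> x \<noteq> rt \<Longrightarrow> par (f x) = f (par x)"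
    "\<And>x. x \<in> N \<Longrightarrow> tree_rank (f x) = tree_rank x"
  using assms unfolding tree_aut_def by auto

lemma par_node: assumes "x \<in> N" "x \<noteq> rt" shows "par x \<in> N"
proof -
  obtain l L where x: "x = (l,L)" by (cases x)
  have l: "l \<le> p" "1 \<le> l" "L \<in> P l" using nonrt assms x nodes_iff by auto
  obtain a where a: "a \<in> L" using block_ne[OF l(3)] by auto
  have "a \<in> {1..n}" using a block_sub[OF l(3)] by blast
  then show ?thesis using parent_eq[OF l(3) a] x l blk_in nodes_iff by auto
qed

lemma level_aux: assumes "f \<in> Aut"
  shows "\<forall>x \<in> N. p + 1 - fst x = d \<longrightarrow> fst (f x) = fst x"
proof (induction d)
  case 0
  show ?case
  proof (intro ballI impI)
    fix x assume x: "x \<in> N" "p + 1 - fst x = 0"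
    obtain l L where xl: "x = (l,L)" by (cases x)
    have "x = rt" using x xl nonrt by fastforce
    then show "fst (f x) = fst x" using autD(2)[OF assms] by simp
  qed
next
  case (Suc d)
  show ?case
  proof (intro ballI impI)
    fix x assume x: "x \<in> N" "p + 1 - fst x = Suc d"
    have nr: "x \<noteq> rt" using x unfolding tree_root_def by auto
    have "par x \<in> N" using par_node x nr by auto
    moreover have "p + 1 - fst (par x) = d" using x fst_par by simp
    ultimately have "fst (f (par x)) = fst x + 1" using Suc fst_par by simp
    then show "fst (f x) = fst x" using autD(3)[OF assms x(1) nr] fst_par[of "f x"] by simp
  qed
qed

lemma level: "f \<in> Aut \<Longrightarrow> x \<in> N \<Longrightarrow> fst (f x) = fst x"
  using level_aux by blast

definition phi where "phi f l M = snd (f (l,M))"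

lemma phi_props: assumes "f \<in> Aut" "(l,M) \<in> N"
  shows "f (l,M) = (l, phi f l M)" "phi f l M \<in> P l" "card (phi f l M) = card M"
    "(l, phi f l M) \<in> N"
proof -
  have fx: "f (l,M) \<in> N" using permutes_in_image[OF autD(1)[OF assms(1)]] assms(2) by simp
  have "fst (f (l,M)) = l" using level assms by fastforce
  then show e: "f (l,M) = (l, phi f l M)" unfolding phi_def by (cases "f (l,M)") simp
  then show "phi f l M \<in> P l" "(l, phi f l M) \<in> N" using fx nodes_iff by auto
  show "card (phi f l M) = card M" using autD(4)[OF assms] e unfolding tree_rank_def by simp
qed

lemma phi_step: assumes "f \<in> Aut" "l \<le> p" "1 \<le> l" "L \<in> P l" "M \<in> P (l+1)" "L \<subseteq> M"
  shows "phi f l L \<subseteq> phi f (l+1) M"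
proof -
  have N1: "(l,L) \<in> N" "(l+1,M) \<in> N" using assms nodes_iff by auto
  obtain a where a: "a \<in> L" using block_ne assms by blast
  have "M = R (l+1)``{a}" using block_eq assms(5) assms(6) a by blast
  then have pa: "par (l,L) = (l+1, M)" using parent_eq[OF assms(4) a] by simp
  have nr: "(l,L) \<noteq> rt" using assms(2) unfolding tree_root_def by auto
  obtain b where b: "b \<in> phi f l L" using block_ne phi_props(2)[OF assms(1) N1(1)] by blast
  have "par (f (l,L)) = (l+1, R (l+1)``{b})"
    using phi_props(1,2)[OF assms(1) N1(1)] parent_eq b by simp
  moreover have "par (f (l,L)) = (l+1, phi f (l+1) M)"
    using autD(3)[OF assms(1) N1(1) nr] pa phi_props(1)[OF assms(1) N1(2)] by simp
  ultimately have "phi f (l+1) M = R (l+1)``{b}" by simp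
  moreover have "b \<in> {1..n}" using b block_sub phi_props(2)[OF assms(1) N1(1)] by blast
  moreover have "phi f l L \<subseteq> R (l+1)``{b}"
    using refine[OF phi_props(2)[OF assms(1) N1(1)] _ blk_in[OF \<open>b \<in> {1..n}\<close>] b blk_self[OF \<open>b \<in> {1..n}\<close>]]
    by simp
  ultimately show ?thesis by simp
qed

lemma phi_leaf_aux: assumes "f \<in> Aut" "L \<in> P 1"
  shows "\<forall>M. k+1 \<le> p+1 \<longrightarrow> M \<in> P (k+1) \<longrightarrow> L \<subseteq> M \<longrightarrow> phi f 1 L \<subseteq> phi f (k+1) M"
proof (induction k)
  case 0
  show ?case
  proof (intro allI impI)
    fix M assume M: "M \<in> P (0+1)" "L \<subseteq> M"
    obtain a where "a \<in> L" using block_ne assms by blast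
    then have "L = M" using blocks_disj[of L 1 M a] M assms by auto
    then show "phi f 1 L \<subseteq> phi f (0 + 1) M" by simp
  qed
next
  case (Suc k)
  show ?case
  proof (intro allI impI)
    fix M assume M: "Suc k + 1 \<le> p + 1" "M \<in> P (Suc k + 1)" "L \<subseteq> M"
    obtain a where a: "a \<in> L" using block_ne assms by blast
    have a1: "a \<in> {1..n}" using a block_sub assms by blast
    define M0 where "M0 = R (k+1)``{a}"
    have M0: "M0 \<in> P (k+1)" "a \<in> M0" using blk_in blk_self a1 M0_def by auto
    have "L \<subseteq> M0" using refine[OF assms(2) _ M0(1) a M0(2)] by simp
    then have "phi f 1 L \<subseteq> phi f (k+1) M0" using Suc M M0 by auto
    also have "\<dots> \<subseteq> phi f (Suc k + 1) M"
      using phi_step[OF assms(1) _ _ M0(1), of M] M refine[OF M0(1) _ M(2) M0(2)] a M(3) by auto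
    finally show "phi f 1 L \<subseteq> phi f (Suc k + 1) M" .
  qed
qed

lemma phi_leaf: assumes "f \<in> Aut" "L \<in> P 1" "(l,M) \<in> N" "L \<subseteq> M"
  shows "phi f 1 L \<subseteq> phi f l M"
proof -
  have l: "1 \<le> l" "l \<le> p+1" "M \<in> P l" using assms(3) nodes_iff by auto
  then obtain k where "l = k+1" by (metis add.commute le_Suc_ex)
  then show ?thesis using phi_leaf_aux[OF assms(1,2), of k] l assms(4) by auto
qed

lemma I_at: assumes "a \<in> {1..n}"
  shows "I f a = order_bij (R 1``{a}) (phi f 1 (R 1``{a})) a"
  unfolding iota_def phi_def using assms leaf_eq by simp

lemma I_mem: assumes "f \<in> Aut" "a \<in> {1..n}"
  shows "I f a \<in> phi f 1 (R 1``{a})"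
proof -
  have N1: "(1, R 1``{a}) \<in> N" using blk_in assms nodes_iff by auto
  show ?thesis unfolding I_at[OF assms(2)]
    using order_bij_mem[OF block_fin[OF blk_in[OF assms(2)]] phi_props(3)[OF assms(1) N1, symmetric]
       blk_self[OF assms(2)] block_fin[OF phi_props(2)[OF assms(1) N1]]] .
qed

lemma I_mem_gen: assumes "f \<in> Aut" "(l,M) \<in> N" "a \<in> M"
  shows "I f a \<in> phi f l M"
proof -
  have l: "1 \<le> l" "M \<in> P l" using assms nodes_iff by auto
  have a1: "a \<in> {1..n}" using block_sub l assms by blast
  have "R 1``{a} \<subseteq> M" using refine[OF blk_in[OF a1] l(1) l(2) blk_self[OF a1] assms(3)] .
  then show ?thesis using phi_leaf[OF assms(1) blk_in[OF a1] assms(2)] I_mem[OF assms(1) a1] by blast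
qed

lemma I_out: "a \<notin> {1..n} \<Longrightarrow> I f a = a"
  unfolding iota_def by auto

lemma I_perm: assumes "f \<in> Aut" shows "I f permutes {1..n}"
proof (rule inj_imp_permutes)
  show "finite {1..n}" by simp
  show "\<And>i. i \<notin> {1..n} \<Longrightarrow> I f i = i" by (rule I_out)
  show "\<And>x. x \<in> {1..n} \<Longrightarrow> I f x \<in> {1..n}"
  proof -
    fix x assume x: "x \<in> {1..n}"
    have "(1, R 1``{x}) \<in> N" using blk_in x nodes_iff by auto
    then have "phi f 1 (R 1``{x}) \<subseteq> {1..n}" using phi_props(2)[OF assms] block_sub by blast
    then show "I f x \<in> {1..n}" using I_mem[OF assms x] by blast
  qed
  show "inj_on (I f) {1..n}"
  proof (rule inj_onI)
    fix a b assume ab: "a \<in> {1..n}" "b \<in> {1..n}" "I f a = I f b"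
    define La where "La = R 1``{a}"
    define Lb where "Lb = R 1``{b}"
    have Na: "(1, La) \<in> N" and Nb: "(1, Lb) \<in> N" using blk_in ab nodes_iff La_def Lb_def by auto
    have m1: "I f a \<in> phi f 1 La" using I_mem[OF assms ab(1)] La_def by simp
    have m2: "I f a \<in> phi f 1 Lb" using I_mem[OF assms ab(2)] Lb_def ab(3) by simp
    have "phi f 1 La = phi f 1 Lb"
      using blocks_disj[OF phi_props(2)[OF assms Na] phi_props(2)[OF assms Nb] m1 m2] .
    then have "f (1, La) = f (1, Lb)" using phi_props(1)[OF assms Na] phi_props(1)[OF assms Nb] by simp
    then have "(1, La) = (1, Lb)" using permutes_inj[OF autD(1)[OF assms]] unfolding inj_def by blast
    then have L: "La = Lb" by simp
    have e: "order_bij La (phi f 1 La) a = order_bij La (phi f 1 La) b"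
      using ab(3) I_at[OF ab(1)] I_at[OF ab(2)] L La_def Lb_def by simp
    have aL: "a \<in> La" "b \<in> La" using L blk_self ab La_def Lb_def by auto
    have LaP: "La \<in> P 1" using blk_in[OF ab(1)] La_def by simp
    show "a = b"
      using order_bij_inj[OF block_fin[OF LaP] block_fin[OF phi_props(2)[OF assms Na]]
        _ aL e] phi_props(3)[OF assms Na] La_def by simp
  qed
qed

lemma f_eq: assumes "f \<in> Aut" "(l,M) \<in> N" shows "f (l,M) = (l, I f ` M)"
proof -
  have sub: "I f ` M \<subseteq> phi f l M" using I_mem_gen[OF assms] by auto
  have M: "M \<in> P l" using assms nodes_iff by auto
  have "card (I f ` M) = card M"
    using permutes_inj_on[OF I_perm[OF assms(1)]] by (simp add: card_image)
  then have "I f ` M = phi f l M"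
    using card_subset_eq[OF block_fin[OF phi_props(2)[OF assms]] sub] phi_props(3)[OF assms] by simp
  then show ?thesis using phi_props(1)[OF assms] by simp
qed

lemma img_block: assumes "f \<in> Aut" "(l,M) \<in> N" shows "I f ` M \<in> P l"
  using f_eq[OF assms] phi_props(1,2)[OF assms] by simp

end

context fs begin

abbreviation hinv :: "('a \<Rightarrow> 'b) \<Rightarrow> 'b \<Rightarrow> 'a" where "hinv f \<equiv> inv_into UNIV f"

lemma I_hom: assumes f: "f \<in> Aut" and g: "g \<in> Aut" shows "I (f \<circ> g) = I f \<circ> I g"
proof (rule ext)
  fix a
  show "I (f \<circ> g) a = (I f \<circ> I g) a"
  proof (cases "a \<in> {1..n}")
    case True
    define L where "L = R 1``{a}"
    have LP: "L \<in> P 1" and NL: "(1,L) \<in> N" and aL: "a \<in> L"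
      using blk_in[OF True] blk_self[OF True] nodes_iff L_def by auto
    define L' where "L' = phi g 1 L"
    have gL: "g (1,L) = (1,L')" and L'P: "L' \<in> P 1" and cL: "card L' = card L" and NL': "(1,L') \<in> N"
      using phi_props[OF g NL] L'_def by auto
    have Ig: "I g a = order_bij L L' a" using I_at[OF True] L_def L'_def by simp
    have bL': "I g a \<in> L'" using I_mem[OF g True] L_def L'_def by simp
    have b1: "I g a \<in> {1..n}" using bL' block_sub[OF L'P] by blast
    have RL': "R 1``{I g a} = L'" using block_eq[OF L'P bL'] by simp
    have If: "I f (I g a) = order_bij L' (phi f 1 L') (I g a)" using I_at[OF b1] RL' by simp
    have "I (f \<circ> g) a = order_bij L (snd (f (g (1, L)))) a"
      unfolding iota_def using True leaf_eq[OF True] L_def by simp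
    also have "\<dots> = order_bij L (phi f 1 L') a" using gL by (simp add: phi_def)
    also have "\<dots> = order_bij L' (phi f 1 L') (order_bij L L' a)"
      using order_bij_comp[OF block_fin[OF LP] block_fin[OF L'P] cL[symmetric] aL] by simp
    finally show ?thesis using If Ig by simp
  next
    case False
    then show ?thesis using I_out by simp
  qed
qed

lemma I_id: "I id = id"
proof (rule ext)
  fix a
  show "I id a = id a"
  proof (cases "a \<in> {1..n}")
    case True
    then show ?thesis unfolding iota_def using leaf_eq[OF True] order_bij_id[OF block_fin[OF blk_in[OF True]] blk_self[OF True]]
      by simp
  qed (simp add: I_out)
qed

lemma aut_id: "id \<in> Aut"
  unfolding tree_aut_def by (simp add: permutes_id)

lemma aut_comp: assumes f: "f \<in> Aut" and g: "g \<in> Aut" shows "f \<circ> g \<in> Aut"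
proof -
  have "par ((f \<circ> g) x) = (f \<circ> g) (par x)" if x: "x \<in> N" "x \<noteq> rt" for x
  proof -
    have gx: "g x \<in> N" using permutes_in_image[OF autD(1)[OF g]] x by simp
    have "g x \<noteq> rt" using x autD(2)[OF g] permutes_inj[OF autD(1)[OF g]] by (metis injD)
    then show ?thesis using autD(3)[OF f gx] autD(3)[OF g x] by simp
  qed
  moreover have "tree_rank ((f \<circ> g) x) = tree_rank x" if x: "x \<in> N" for x
    using autD(4)[OF f] autD(4)[OF g x] permutes_in_image[OF autD(1)[OF g]] x by simp
  ultimately show ?thesis unfolding tree_aut_def
    using permutes_compose[OF autD(1)[OF g] autD(1)[OF f]] autD(2)[OF f] autD(2)[OF g] by auto
qed

lemma aut_inv: assumes f: "f \<in> Aut" shows "hinv f \<in> Aut"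
proof -
  have pf: "f permutes N" using autD(1)[OF f] .
  have pi: "hinv f permutes N" using permutes_inv[OF pf] .
  have r: "hinv f rt = rt" using permutes_inv_eq[OF pf] autD(2)[OF f] by simp
  have "par (hinv f x) = hinv f (par x)" if x: "x \<in> N" "x \<noteq> rt" for x
  proof -
    define y where "y = hinv f x"
    have yN: "y \<in> N" using permutes_in_image[OF pi] x y_def by simp
    have fy: "f y = x" using permutes_inverses(1)[OF pf] y_def by simp
    have "y \<noteq> rt" using fy x autD(2)[OF f] by auto
    then have "par x = f (par y)" using autD(3)[OF f yN] fy by simp
    then show ?thesis using permutes_inverses(2)[OF pf] y_def by simp
  qed
  moreover have "tree_rank (hinv f x) = tree_rank x" if x: "x \<in> N" for x
    using autD(4)[OF f, of "hinv f x"] permutes_in_image[OF pi] x permutes_inverses(1)[OF pf] by simp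
  ultimately show ?thesis unfolding tree_aut_def using pi r by auto
qed

lemma group_aut: "group (aut_group n p A)"
  apply (rule groupI)
      apply (simp_all add: aut_group_def aut_comp aut_id o_assoc)
  apply (rule_tac x="hinv x" in bexI)
   apply (simp add: permutes_inv_o(2)[OF autD(1)])
  apply (simp add: aut_inv)
  done

lemma I_hom_group: "I \<in> hom (aut_group n p A) (sym_group n)"
  unfolding hom_def aut_group_def sym_group_def using I_perm I_hom by auto

lemma I_inv_comp: assumes f: "f \<in> Aut" shows "I f \<circ> I (hinv f) = id" "I (hinv f) \<circ> I f = id"
  using I_hom[OF f aut_inv[OF f]] I_hom[OF aut_inv[OF f] f] permutes_inv_o[OF autD(1)[OF f]] I_id
  by auto

lemma I_inv: assumes f: "f \<in> Aut" shows "hinv (I f) = I (hinv f)"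
  using inv_unique_comp I_inv_comp[OF f] by blast

lemma I_inj: "inj_on I Aut"
proof (rule inj_onI)
  fix f g assume f: "f \<in> Aut" and g: "g \<in> Aut" and e: "I f = I g"
  show "f = g"
  proof (rule ext)
    fix x show "f x = g x"
    proof (cases "x \<in> N")
      case True
      obtain l M where x: "x = (l,M)" by (cases x)
      then show ?thesis using f_eq[OF f] f_eq[OF g] True e by simp
    next
      case False
      then show ?thesis using permutes_not_in[OF autD(1)[OF f]] permutes_not_in[OF autD(1)[OF g]] by simp
    qed
  qed
qed

end

context fs begin

abbreviation "W \<equiv> Wh1 n p A"

lemma whD: "w \<in> W \<Longrightarrow> w permutes {1..n}" "w \<in> W \<Longrightarrow> L \<in> P 1 \<Longrightarrow> w ` L \<subseteq> L"
  unfolding Wh1_def by auto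

lemma wh_block: assumes w: "w \<in> W" and M: "(l,M) \<in> N" shows "w ` M = M"
proof -
  have MP: "M \<in> P l" "1 \<le> l" using M nodes_iff by auto
  have sub: "w ` M \<subseteq> M"
  proof
    fix y assume "y \<in> w ` M"
    then obtain a where a: "a \<in> M" "y = w a" by auto
    have a1: "a \<in> {1..n}" using a block_sub[OF MP(1)] by blast
    have "w a \<in> R 1``{a}" using whD(2)[OF w blk_in[OF a1]] blk_self[OF a1] by blast
    moreover have "R 1``{a} \<subseteq> M" using refine[OF blk_in[OF a1] MP(2) MP(1) blk_self[OF a1] a(1)] .
    ultimately show "y \<in> M" using a by blast
  qed
  have "card (w ` M) = card M" using permutes_inj_on[OF whD(1)[OF w]] by (simp add: card_image)
  then show ?thesis using card_subset_eq[OF block_fin[OF MP(1)] sub] by simp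
qed

lemma wh_id: "id \<in> W"
  unfolding Wh1_def by (simp add: permutes_id)

lemma wh_comp: assumes "w \<in> W" "v \<in> W" shows "w \<circ> v \<in> W"
proof -
  have "(w \<circ> v) ` L \<subseteq> L" if "L \<in> P 1" for L
  proof -
    have "(w \<circ> v) ` L = w ` (v ` L)" by (simp add: image_comp)
    also have "\<dots> \<subseteq> w ` L" using whD(2)[OF assms(2) that] by (rule image_mono)
    also have "\<dots> \<subseteq> L" using whD(2)[OF assms(1) that] .
    finally show ?thesis .
  qed
  then show ?thesis unfolding Wh1_def using permutes_compose[OF whD(1)[OF assms(2)] whD(1)[OF assms(1)]] by simp
qed

lemma wh_inv: assumes w: "w \<in> W" shows "hinv w \<in> W"
proof -
  have "hinv w ` L \<subseteq> L" if L: "L \<in> P 1" for L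
  proof -
    have "(1,L) \<in> N" using L nodes_iff by auto
    then have "w ` L = L" using wh_block[OF w] by blast
    show ?thesis
    proof
      fix x assume "x \<in> hinv w ` L"
      then obtain y where y: "y \<in> L" "x = hinv w y" by auto
      then obtain z where z: "z \<in> L" "y = w z" using \<open>w ` L = L\<close> by blast
      then show "x \<in> L" using y permutes_inverses(2)[OF whD(1)[OF w]] by simp
    qed
  qed
  then show ?thesis unfolding Wh1_def using permutes_inv[OF whD(1)[OF w]] by auto
qed

lemma conj_wh: assumes f: "f \<in> Aut" and w: "w \<in> W" shows "I f \<circ> w \<circ> hinv (I f) \<in> W"
proof -
  have pI: "I f permutes {1..n}" using I_perm[OF f] .
  have perm: "I f \<circ> w \<circ> hinv (I f) permutes {1..n}"
    using permutes_compose[OF permutes_inv[OF pI] permutes_compose[OF whD(1)[OF w] pI]] by (simp add: o_assoc)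
  have "(I f \<circ> w \<circ> hinv (I f)) ` L \<subseteq> L" if L: "L \<in> P 1" for L
  proof -
    have NL: "(1,L) \<in> N" using L nodes_iff by auto
    let ?g = "hinv f"
    have g: "?g \<in> Aut" using aut_inv[OF f] .
    have e: "hinv (I f) = I ?g" using I_inv[OF f] .
    have NL': "(1, I ?g ` L) \<in> N" using img_block[OF g NL] nodes_iff by auto
    have "(I f \<circ> w \<circ> hinv (I f)) ` L = I f ` (w ` (I ?g ` L))" using e by (simp add: image_comp)
    also have "\<dots> = I f ` (I ?g ` L)" using wh_block[OF w NL'] by simp
    also have "\<dots> = (I f \<circ> I ?g) ` L" by (simp add: image_comp)
    also have "\<dots> = L" using I_inv_comp(1)[OF f] by simp
    finally show ?thesis by simp
  qed
  then show ?thesis unfolding Wh1_def using perm by auto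
qed

lemma normalise: assumes f: "f \<in> Aut"
  shows "(\<lambda>w. I f \<circ> w \<circ> hinv (I f)) ` W = W"
proof
  show "(\<lambda>w. I f \<circ> w \<circ> hinv (I f)) ` W \<subseteq> W" using conj_wh[OF f] by auto
  show "W \<subseteq> (\<lambda>w. I f \<circ> w \<circ> hinv (I f)) ` W"
  proof
    fix w assume w: "w \<in> W"
    let ?g = "hinv f"
    have g: "?g \<in> Aut" using aut_inv[OF f] .
    have w': "I ?g \<circ> w \<circ> hinv (I ?g) \<in> W" using conj_wh[OF g w] .
    have e1: "hinv (I f) = I ?g" using I_inv[OF f] .
    have e2: "hinv (I ?g) = I f"
      using I_inv[OF g] permutes_inv_inv[OF autD(1)[OF f]] by simp
    have "I f \<circ> (I ?g \<circ> w \<circ> hinv (I ?g)) \<circ> hinv (I f) = (I f \<circ> I ?g) \<circ> w \<circ> (I f \<circ> I ?g)"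
      using e1 e2 by (simp add: o_assoc)
    also have "\<dots> = w" using I_inv_comp(1)[OF f] by simp
    finally have "w = (\<lambda>w. I f \<circ> w \<circ> hinv (I f)) (I ?g \<circ> w \<circ> hinv (I ?g))" by simp
    then show "w \<in> (\<lambda>w. I f \<circ> w \<circ> hinv (I f)) ` W" using w' by (rule image_eqI)
  qed
qed

lemma inter_trivial: "I ` Aut \<inter> W = {id}"
proof
  have "id \<in> I ` Aut" using aut_id I_id by (metis image_eqI)
  then show "{id} \<subseteq> I ` Aut \<inter> W" using wh_id by simp
  show "I ` Aut \<inter> W \<subseteq> {id}"
  proof
    fix s assume "s \<in> I ` Aut \<inter> W"
    then obtain f where f: "f \<in> Aut" "I f \<in> W" "s = I f" by auto
    have "I f a = a" for a
    proof (cases "a \<in> {1..n}")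
      case True
      define L where "L = R 1``{a}"
      have LP: "L \<in> P 1" and NL: "(1,L) \<in> N" and aL: "a \<in> L"
        using blk_in[OF True] blk_self[OF True] nodes_iff L_def by auto
      have "I f ` L = L" using wh_block[OF f(2) NL] .
      then have "phi f 1 L = L" using f_eq[OF f(1) NL] phi_props(1)[OF f(1) NL] by simp
      then show ?thesis using I_at[OF True] L_def order_bij_id[OF block_fin[OF LP] aL] by simp
    qed (simp add: I_out)
    then show "s \<in> {id}" using f by auto
  qed
qed

end

context fs begin

abbreviation "U \<equiv> Uspace n p A"

lemma stab_of_blocks: assumes s: "s permutes {1..n}" and bl: "\<And>M. M \<in> P l \<Longrightarrow> s ` M \<in> P l"
  shows "perm_act s ` U l \<subseteq> U l"
proof
  fix y assume "y \<in> perm_act s ` U l"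
  then obtain x where x1: "x \<in> U l" and yx: "y = perm_act s x" by (rule imageE)
  have x: "x \<in> U l" "y = x \<circ> hinv s" using x1 yx by (simp_all add: perm_act_def)
  have xt: "x \<in> tspace n" and xc0: "\<forall>L\<in>P l. \<forall>a\<in>L. \<forall>b\<in>L. x a = x b"
    using x(1) unfolding Uspace_def mem_Collect_eq by (rule conjunct1, rule conjunct2)
  have x0: "\<And>a. a \<notin> {1..n} \<Longrightarrow> x a = 0" and xs: "(\<Sum>a=1..n. x a) = 0"
    using xt unfolding tspace_def by simp_all
  have xc: "\<And>M a b. M \<in> P l \<Longrightarrow> a \<in> M \<Longrightarrow> b \<in> M \<Longrightarrow> x a = x b"
  proof -
    fix M a b assume "M \<in> P l" "a \<in> M" "b \<in> M"
    then show "x a = x b" using xc0 by blast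
  qed
  have pi: "hinv s permutes {1..n}" using permutes_inv[OF s] .
  have y0: "y a = 0" if "a \<notin> {1..n}" for a
    using x(2) permutes_not_in[OF pi that] x0[OF that] by simp
  have "(\<Sum>a=1..n. y a) = (\<Sum>a=1..n. x a)"
    using sum.permute[OF pi, of x] x(2) by (simp add: comp_def)
  then have ys: "(\<Sum>a=1..n. y a) = 0" using xs by simp
  have yc: "y a = y b" if M: "M \<in> P l" and ab: "a \<in> M" "b \<in> M" for M a b
  proof -
    define a' where "a' = hinv s a"
    define b' where "b' = hinv s b"
    have a1: "a \<in> {1..n}" "b \<in> {1..n}" using ab block_sub[OF M] by auto
    have a'1: "a' \<in> {1..n}" "b' \<in> {1..n}" using a1 permutes_in_image[OF pi] a'_def b'_def by auto
    have sa: "s a' = a" "s b' = b" using permutes_inverses(1)[OF s] a'_def b'_def by auto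
    have i1: "a \<in> s ` (R l``{a'})" using imageI[OF blk_self[OF a'1(1)], of s] sa(1) by simp
    have i2: "b \<in> s ` (R l``{b'})" using imageI[OF blk_self[OF a'1(2)], of s] sa(2) by simp
    have "s ` (R l``{a'}) = M"
      using blocks_disj[OF bl[OF blk_in[OF a'1(1)]] M i1 ab(1)] .
    moreover have "s ` (R l``{b'}) = M"
      using blocks_disj[OF bl[OF blk_in[OF a'1(2)]] M i2 ab(2)] .
    ultimately have "s ` (R l``{a'}) = s ` (R l``{b'})" by simp
    then have "R l``{a'} = R l``{b'}" by (rule inj_image_eq_iff[OF permutes_inj[OF s], THEN iffD1])
    then have "b' \<in> R l``{a'}" using blk_self[OF a'1(2)] by simp
    then have "x a' = x b'" by (rule xc[OF blk_in[OF a'1(1)] blk_self[OF a'1(1)]])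
    then show ?thesis using x(2) a'_def b'_def by simp
  qed
  have "y \<in> tspace n" unfolding tspace_def using y0 ys by simp
  moreover have "\<forall>L\<in>P l. \<forall>a\<in>L. \<forall>b\<in>L. y a = y b"
    by (intro ballI) (rule yc; assumption)
  ultimately show "y \<in> U l" unfolding Uspace_def mem_Collect_eq by (rule conjI)
qed

lemma sep_vec: assumes M1: "M1 \<in> P l" and M2: "M2 \<in> P l" and ne: "M1 \<noteq> M2"
  shows "\<exists>x \<in> U l. \<forall>a\<in>M1. \<forall>b\<in>M2. x a \<noteq> x b"
proof -
  have disj: "M1 \<inter> M2 = {}" using blocks_disj[OF M1 M2] ne by blast
  define c1 where "c1 = card M1"
  define c2 where "c2 = card M2"
  have c: "c1 > 0" "c2 > 0" using block_fin block_ne M1 M2 c1_def c2_def by (auto simp: card_gt_0_iff)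
  define x :: "nat \<Rightarrow> complex" where
    "x = (\<lambda>a. (if a \<in> M1 then of_nat c2 else 0) + (if a \<in> M2 then - of_nat c1 else 0))"
  have s1: "(\<Sum>a=1..n. (if a \<in> M1 then (of_nat c2::complex) else 0)) = of_nat c1 * of_nat c2"
    using sum.inter_restrict[of "{1..n}" "\<lambda>_. (of_nat c2::complex)" M1, symmetric]
      Int_absorb1[OF block_sub[OF M1]] c1_def by (simp add: Int_commute)
  have s2: "(\<Sum>a=1..n. (if a \<in> M2 then - (of_nat c1::complex) else 0)) = - (of_nat c2 * of_nat c1)"
    using sum.inter_restrict[of "{1..n}" "\<lambda>_. - (of_nat c1::complex)" M2, symmetric]
      Int_absorb1[OF block_sub[OF M2]] c2_def by (simp add: Int_commute)
  have xs: "(\<Sum>a=1..n. x a) = 0" unfolding x_def sum.distrib s1 s2 by simp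
  have x0: "x a = 0" if "a \<notin> {1..n}" for a
    using that block_sub[OF M1] block_sub[OF M2] unfolding x_def by auto
  have xc: "x a = x b" if M: "M \<in> P l" and ab: "a \<in> M" "b \<in> M" for M a b
  proof -
    have "M = M1 \<or> M \<inter> M1 = {}" using blocks_disj[OF M M1] by blast
    moreover have "M = M2 \<or> M \<inter> M2 = {}" using blocks_disj[OF M M2] by blast
    ultimately show ?thesis using ab disj unfolding x_def by auto
  qed
  have "x \<in> tspace n" unfolding tspace_def using x0 xs by simp
  moreover have "\<forall>L\<in>P l. \<forall>a\<in>L. \<forall>b\<in>L. x a = x b"
    by (intro ballI) (rule xc; assumption)
  ultimately have xU: "x \<in> U l" unfolding Uspace_def mem_Collect_eq by (rule conjI)
  have "x a \<noteq> x b" if "a \<in> M1" "b \<in> M2" for a b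
  proof
    assume "x a = x b"
    moreover have "a \<notin> M2" "b \<notin> M1" using that disj by auto
    ultimately have "(of_nat c2::complex) = - of_nat c1" using that unfolding x_def by simp
    then have "(of_nat (c1 + c2)::complex) = 0" by simp
    then show False using c by (simp only: of_nat_eq_0_iff)
  qed
  then show ?thesis using xU by blast
qed

lemma R_sub: "R l \<subseteq> {1..n} \<times> {1..n}"
  unfolding lev_rel_def by auto

lemma blocks_of_stab: assumes s: "s permutes {1..n}" and st: "perm_act s ` U l \<subseteq> U l"
  and M: "M \<in> P l" shows "s ` M \<in> P l"
proof -
  have pi: "hinv s permutes {1..n}" using permutes_inv[OF s] .
  have step1: "(hinv s a, hinv s b) \<in> R l" if ab: "(a,b) \<in> R l" for a b
  proof (rule ccontr)
    assume nr: "(hinv s a, hinv s b) \<notin> R l"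
    have a1: "a \<in> {1..n}" "b \<in> {1..n}" using subsetD[OF R_sub ab] by auto
    define a' where "a' = hinv s a"
    define b' where "b' = hinv s b"
    have a'1: "a' \<in> {1..n}" "b' \<in> {1..n}" using a1 permutes_in_image[OF pi] a'_def b'_def by auto
    have ne: "R l``{a'} \<noteq> R l``{b'}"
    proof
      assume "R l``{a'} = R l``{b'}"
      then have "b' \<in> R l``{a'}" using blk_self[OF a'1(2)] by simp
      then show False using nr a'_def b'_def by simp
    qed
    obtain x where xU: "x \<in> U l" and sep: "\<forall>c\<in>R l``{a'}. \<forall>d\<in>R l``{b'}. x c \<noteq> x d"
      using sep_vec[OF blk_in[OF a'1(1)] blk_in[OF a'1(2)] ne] by blast
    have "perm_act s x \<in> U l" using st xU by blast
    then have H: "\<forall>L\<in>P l. \<forall>c\<in>L. \<forall>d\<in>L. (x \<circ> hinv s) c = (x \<circ> hinv s) d"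
      unfolding Uspace_def perm_act_def mem_Collect_eq by (rule conjunct2)
    have "b \<in> R l``{a}" using ab by simp
    then have "(x \<circ> hinv s) a = (x \<circ> hinv s) b"
      using H[rule_format, OF blk_in[OF a1(1)] blk_self[OF a1(1)]] by blast
    then have "x a' = x b'" using a'_def b'_def by simp
    then show False using sep blk_self[OF a'1(1)] blk_self[OF a'1(2)] by blast
  qed
  define h where "h = (\<lambda>(a::nat,b::nat). (hinv s a, hinv s b))"
  have fin: "finite (R l)" using R_sub finite_subset by blast
  have hsub: "h ` R l \<subseteq> R l" using step1 unfolding h_def by auto
  have hinj: "inj_on h (R l)" using permutes_inj[OF pi] unfolding h_def inj_on_def inj_def by auto
  have hR: "h ` R l = R l" using endo_inj_surj[OF fin hsub hinj] .
  have step3: "(s a, s b) \<in> R l" if ab: "(a,b) \<in> R l" for a b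
  proof -
    from ab hR have "(a,b) \<in> h ` R l" by simp
    then obtain cd where cd0: "cd \<in> R l" "(a,b) = h cd" by (rule imageE)
    obtain c d where "cd = (c,d)" by (cases cd)
    then have cd: "(c,d) \<in> R l" "h (c,d) = (a,b)" using cd0 by auto
    then have "a = hinv s c" "b = hinv s d" unfolding h_def by auto
    then have "c = s a" "d = s b" using permutes_inverses(1)[OF s] by auto
    then show ?thesis using cd by simp
  qed
  obtain a where a: "a \<in> M" using block_ne[OF M] by blast
  have a1: "a \<in> {1..n}" using a block_sub[OF M] by blast
  have Meq: "M = R l``{a}" using block_eq[OF M a] .
  have "s ` M = R l``{s a}"
  proof
    show "s ` M \<subseteq> R l``{s a}" using step3 Meq by auto
    show "R l``{s a} \<subseteq> s ` M"
    proof
      fix d assume "d \<in> R l``{s a}"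
      then have "(s a, d) \<in> R l" by simp
      then have "(hinv s (s a), hinv s d) \<in> R l" using step1 by blast
      then have "(a, hinv s d) \<in> R l" using permutes_inverses(2)[OF s] by simp
      then have "hinv s d \<in> M" using Meq by simp
      moreover have "d = s (hinv s d)" using permutes_inverses(1)[OF s] by simp
      ultimately show "d \<in> s ` M" by blast
    qed
  qed
  moreover have "s a \<in> {1..n}" using a1 permutes_in_image[OF s] by simp
  ultimately show ?thesis using blk_in by simp
qed

end

context fs begin

abbreviation "S \<equiv> semidirect n p A"
abbreviation "Phi \<equiv> semidirect_map n p A"

lemma S_carrier: "carrier S = Aut \<times> W"
  unfolding semidirect_def by simp

lemma S_mult: "(f,w) \<otimes>\<^bsub>S\<^esub> (f',w') = (f \<circ> f', (hinv (I f') \<circ> w \<circ> I f') \<circ> w')"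
  unfolding semidirect_def by simp

lemma S_one: "\<one>\<^bsub>S\<^esub> = (id, id)"
  unfolding semidirect_def by simp

lemma Phi_eq: "Phi (f,w) = I f \<circ> w"
  unfolding semidirect_map_def by simp

lemma conj_wh': assumes f: "f \<in> Aut" and w: "w \<in> W" shows "hinv (I f) \<circ> w \<circ> I f \<in> W"
proof -
  let ?g = "hinv f"
  have g: "?g \<in> Aut" using aut_inv[OF f] .
  have e1: "hinv (I f) = I ?g" using I_inv[OF f] .
  have e2: "hinv (I ?g) = I f"
    using I_inv[OF g] permutes_inv_inv[OF autD(1)[OF f]] by simp
  show ?thesis using conj_wh[OF g w] e1 e2 by simp
qed

lemma S_closed: assumes "x \<in> carrier S" "y \<in> carrier S" shows "x \<otimes>\<^bsub>S\<^esub> y \<in> carrier S"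
proof -
  obtain f w f' w' where x: "x = (f,w)" "f \<in> Aut" "w \<in> W" and y: "y = (f',w')" "f' \<in> Aut" "w' \<in> W"
    using assms S_carrier by auto
  show ?thesis using x y S_mult S_carrier aut_comp wh_comp conj_wh' by simp
qed

lemma Phi_mult: assumes "x \<in> carrier S" "y \<in> carrier S" shows "Phi (x \<otimes>\<^bsub>S\<^esub> y) = Phi x \<circ> Phi y"
proof -
  obtain f w f' w' where x: "x = (f,w)" "f \<in> Aut" "w \<in> W" and y: "y = (f',w')" "f' \<in> Aut" "w' \<in> W"
    using assms S_carrier by auto
  have "Phi (x \<otimes>\<^bsub>S\<^esub> y) = I (f \<circ> f') \<circ> ((hinv (I f') \<circ> w \<circ> I f') \<circ> w')"
    using x y S_mult Phi_eq by simp
  also have "\<dots> = I f \<circ> (I f' \<circ> hinv (I f')) \<circ> w \<circ> I f' \<circ> w'"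
    using I_hom[OF x(2) y(2)] by (simp add: o_assoc)
  also have "\<dots> = I f \<circ> w \<circ> I f' \<circ> w'"
    using permutes_inv_o(1)[OF I_perm[OF y(2)]] by simp
  finally show ?thesis using x y Phi_eq by (simp add: o_assoc)
qed

lemma Phi_perm: assumes "x \<in> carrier S" shows "Phi x permutes {1..n}"
proof -
  obtain f w where x: "x = (f,w)" "f \<in> Aut" "w \<in> W" using assms S_carrier by auto
  show ?thesis using x Phi_eq permutes_compose[OF whD(1)[OF x(3)] I_perm[OF x(2)]] by simp
qed

lemma Phi_inj: "inj_on Phi (carrier S)"
proof (rule inj_onI)
  fix x y assume xS: "x \<in> carrier S" and yS: "y \<in> carrier S" and e: "Phi x = Phi y"
  obtain f w g v where x: "x = (f,w)" "f \<in> Aut" "w \<in> W" and y: "y = (g,v)" "g \<in> Aut" "v \<in> W"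
    using xS yS S_carrier by auto
  have pw: "w permutes {1..n}" using whD(1)[OF x(3)] .
  have pIg: "I g permutes {1..n}" using I_perm[OF y(2)] .
  have eq: "I f (w b) = I g (v b)" for b using e x y Phi_eq by (metis comp_apply)
  have "hinv (I g) \<circ> I f = v \<circ> hinv w"
  proof (rule ext)
    fix a
    define b where "b = hinv w a"
    have "a = w b" using permutes_inverses(1)[OF pw] b_def by simp
    then have "hinv (I g) (I f a) = v b" using eq permutes_inverses(2)[OF pIg] by simp
    then show "(hinv (I g) \<circ> I f) a = (v \<circ> hinv w) a" using b_def by simp
  qed
  moreover have "hinv (I g) \<circ> I f = I (hinv g \<circ> f)" using I_inv[OF y(2)] I_hom[OF aut_inv[OF y(2)] x(2)] by simp
  moreover have "v \<circ> hinv w \<in> W" using wh_comp[OF x(3)[THEN wh_inv, THEN wh_comp[OF y(3)]]] wh_id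
    wh_comp[OF y(3) wh_inv[OF x(3)]] by simp
  moreover have "I (hinv g \<circ> f) \<in> I ` Aut" using aut_comp[OF aut_inv[OF y(2)] x(2)] by simp
  ultimately have "I (hinv g \<circ> f) \<in> I ` Aut \<inter> W" by simp
  then have "I (hinv g \<circ> f) = I id" using inter_trivial I_id by simp
  then have "hinv g \<circ> f = id"
    using inj_onD[OF I_inj _ aut_comp[OF aut_inv[OF y(2)] x(2)] aut_id] by simp
  then have "g \<circ> (hinv g \<circ> f) = g" by simp
  then have fg: "f = g" using permutes_inv_o(1)[OF autD(1)[OF y(2)]] by (simp add: o_assoc)
  have "w = v"
  proof (rule ext)
    fix b
    have "I f (w b) = I f (v b)" using eq fg by simp
    then show "w b = v b" using permutes_inj[OF I_perm[OF x(2)]] by (simp add: inj_eq)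
  qed
  then show "x = y" using x y fg by simp
qed

lemma group_S: "group S"
proof (rule groupI)
  show "\<And>x y. x \<in> carrier S \<Longrightarrow> y \<in> carrier S \<Longrightarrow> x \<otimes>\<^bsub>S\<^esub> y \<in> carrier S" by (rule S_closed)
  show "\<one>\<^bsub>S\<^esub> \<in> carrier S" using S_one S_carrier aut_id wh_id by simp
  show "(x \<otimes>\<^bsub>S\<^esub> y) \<otimes>\<^bsub>S\<^esub> z = x \<otimes>\<^bsub>S\<^esub> (y \<otimes>\<^bsub>S\<^esub> z)"
    if "x \<in> carrier S" "y \<in> carrier S" "z \<in> carrier S" for x y z
  proof (rule inj_onD[OF Phi_inj])
    show "Phi ((x \<otimes>\<^bsub>S\<^esub> y) \<otimes>\<^bsub>S\<^esub> z) = Phi (x \<otimes>\<^bsub>S\<^esub> (y \<otimes>\<^bsub>S\<^esub> z))"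
      using that S_closed Phi_mult by (simp add: o_assoc)
    show "(x \<otimes>\<^bsub>S\<^esub> y) \<otimes>\<^bsub>S\<^esub> z \<in> carrier S" "x \<otimes>\<^bsub>S\<^esub> (y \<otimes>\<^bsub>S\<^esub> z) \<in> carrier S"
      using that S_closed by simp_all
  qed
  show "\<one>\<^bsub>S\<^esub> \<otimes>\<^bsub>S\<^esub> x = x" if xS: "x \<in> carrier S" for x
  proof -
    obtain f w where x: "x = (f,w)" "f \<in> Aut" "w \<in> W" using xS S_carrier by auto
    show ?thesis using x S_one S_mult permutes_inv_o(2)[OF I_perm[OF x(2)]] by simp
  qed
  show "\<exists>y\<in>carrier S. y \<otimes>\<^bsub>S\<^esub> x = \<one>\<^bsub>S\<^esub>" if xS: "x \<in> carrier S" for x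
  proof -
    obtain f w where x: "x = (f,w)" "f \<in> Aut" "w \<in> W" using xS S_carrier by auto
    define y where "y = (hinv f, I f \<circ> hinv w \<circ> hinv (I f))"
    have yS: "y \<in> carrier S" using y_def S_carrier aut_inv[OF x(2)] conj_wh[OF x(2) wh_inv[OF x(3)]] by simp
    have pw: "w permutes {1..n}" using whD(1)[OF x(3)] .
    have pI: "I f permutes {1..n}" using I_perm[OF x(2)] .
    have "Phi (y \<otimes>\<^bsub>S\<^esub> x) = Phi y \<circ> Phi x" using Phi_mult yS xS by simp
    also have "\<dots> = id"
    proof (rule ext)
      fix a
      have "(Phi y \<circ> Phi x) a = I (hinv f) (I f (hinv w (hinv (I f) (I f (w a)))))"
        using y_def x Phi_eq by simp
      also have "\<dots> = hinv (I f) (I f a)"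
        using I_inv[OF x(2)] permutes_inverses(2)[OF pI] permutes_inverses(2)[OF pw] by simp
      also have "\<dots> = a" using permutes_inverses(2)[OF pI] by simp
      finally show "(Phi y \<circ> Phi x) a = id a" by simp
    qed
    also have "\<dots> = Phi \<one>\<^bsub>S\<^esub>" using S_one Phi_eq I_id by simp
    finally have "y \<otimes>\<^bsub>S\<^esub> x = \<one>\<^bsub>S\<^esub>"
      using inj_onD[OF Phi_inj _ S_closed[OF yS xS]] S_one S_carrier aut_id wh_id by simp
    then show ?thesis using yS by blast
  qed
qed

lemma Phi_hom: "Phi \<in> hom S (sym_group n)"
  unfolding hom_def sym_group_def using Phi_perm Phi_mult by auto

lemma Phi_stab: assumes f: "f \<in> Aut" and w: "w \<in> W" shows "I f \<circ> w \<in> stabU n p A"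
proof -
  have pm: "I f \<circ> w permutes {1..n}" using permutes_compose[OF whD(1)[OF w] I_perm[OF f]] .
  have "perm_act (I f \<circ> w) ` U l \<subseteq> U l" if l: "l \<in> {1..p}" for l
  proof (rule stab_of_blocks[OF pm])
    fix M assume M: "M \<in> P l"
    have N: "(l,M) \<in> N" using M l nodes_iff by auto
    have "(I f \<circ> w) ` M = I f ` (w ` M)" by (simp add: image_comp)
    also have "\<dots> = I f ` M" using wh_block[OF w N] by simp
    finally show "(I f \<circ> w) ` M \<in> P l" using img_block[OF f N] by simp
  qed
  then show ?thesis unfolding stabU_def using pm by blast
qed

lemma stab_blocks: assumes s: "s \<in> stabU n p A" and N: "(l,M) \<in> N" shows "s ` M \<in> P l"
proof -
  have ps: "s permutes {1..n}" using s unfolding stabU_def by blast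
  have l: "1 \<le> l" "l \<le> p+1" "M \<in> P l" using N nodes_iff by auto
  show ?thesis
  proof (cases "l = p+1")
    case True
    then have "M = {1..n}" using l P_top by simp
    then show ?thesis using permutes_image[OF ps] True l by simp
  next
    case False
    then have "l \<in> {1..p}" using l by auto
    then have "perm_act s ` U l \<subseteq> U l" using s unfolding stabU_def by blast
    then show ?thesis using blocks_of_stab[OF ps _ l(3)] by blast
  qed
qed

definition fsig where "fsig s = (\<lambda>x. if x \<in> N then (fst x, s ` snd x) else x)"

lemma fsig_aut: assumes s: "s \<in> stabU n p A" shows "fsig s \<in> Aut"
proof -
  have ps: "s permutes {1..n}" using s unfolding stabU_def by blast
  have fN: "fsig s x \<in> N" if "x \<in> N" for x
  proof -
    obtain l M where x: "x = (l,M)" by (cases x)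
    show ?thesis using that x stab_blocks[OF s] nodes_iff unfolding fsig_def by auto
  qed
  have perm: "fsig s permutes N"
  proof (rule inj_imp_permutes)
    show "finite N" by (rule fin_N)
    show "\<And>x. x \<in> N \<Longrightarrow> fsig s x \<in> N" by (rule fN)
    show "\<And>i. i \<notin> N \<Longrightarrow> fsig s i = i" unfolding fsig_def by simp
    show "inj_on (fsig s) N"
    proof (rule inj_onI)
      fix x y assume x: "x \<in> N" and y: "y \<in> N" and e: "fsig s x = fsig s y"
      then have e1: "fst x = fst y" and e2: "s ` snd x = s ` snd y" unfolding fsig_def by auto
      have "snd x = snd y" using e2 by (rule inj_image_eq_iff[OF permutes_inj[OF ps], THEN iffD1])
      then show "x = y" using e1 by (simp add: prod_eq_iff)
    qed
  qed
  have root: "fsig s rt = rt" using rt_node permutes_image[OF ps] unfolding fsig_def tree_root_def by simp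
  have par: "par (fsig s x) = fsig s (par x)" if x: "x \<in> N" "x \<noteq> rt" for x
  proof -
    obtain l L where xl: "x = (l,L)" by (cases x)
    have l: "l \<le> p" "1 \<le> l" "L \<in> P l" using nonrt x xl nodes_iff by auto
    obtain a where a: "a \<in> L" using block_ne[OF l(3)] by blast
    have a1: "a \<in> {1..n}" using a block_sub[OF l(3)] by blast
    have px: "par x = (l+1, R (l+1)``{a})" using parent_eq[OF l(3) a] xl by simp
    have Np: "(l+1, R (l+1)``{a}) \<in> N" using px par_node[OF x] by simp
    have sL: "s ` L \<in> P l" using stab_blocks[OF s] x xl by simp
    have "fsig s x = (l, s ` L)" using x xl unfolding fsig_def by simp
    then have "par (fsig s x) = (l+1, R (l+1)``{s a})" using parent_eq[OF sL] a by simp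
    moreover have "fsig s (par x) = (l+1, s ` (R (l+1)``{a}))" using px Np unfolding fsig_def by simp
    moreover have "s ` (R (l+1)``{a}) = R (l+1)``{s a}"
      using block_eq[OF stab_blocks[OF s Np]] imageI[OF blk_self[OF a1], of s] by blast
    ultimately show ?thesis by simp
  qed
  have rank: "tree_rank (fsig s x) = tree_rank x" if x: "x \<in> N" for x
    using x permutes_inj_on[OF ps] unfolding fsig_def tree_rank_def by (simp add: card_image)
  show ?thesis unfolding tree_aut_def using perm root par rank by blast
qed

lemma Phi_surj: assumes s: "s \<in> stabU n p A" shows "s \<in> Phi ` carrier S"
proof -
  have ps: "s permutes {1..n}" using s unfolding stabU_def by blast
  let ?f = "fsig s"
  have f: "?f \<in> Aut" using fsig_aut[OF s] .
  have pI: "I ?f permutes {1..n}" using I_perm[OF f] .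
  define w where "w = hinv (I ?f) \<circ> s"
  have img: "I ?f ` L = s ` L" if L: "L \<in> P 1" for L
  proof -
    have NL: "(1,L) \<in> N" using L nodes_iff by auto
    have "?f (1,L) = (1, s ` L)" using NL unfolding fsig_def by simp
    then show ?thesis using f_eq[OF f NL] by simp
  qed
  have "w ` L \<subseteq> L" if L: "L \<in> P 1" for L
  proof
    fix y assume "y \<in> w ` L"
    then obtain a where a: "a \<in> L" "y = w a" by blast
    have "s a \<in> I ?f ` L" using img[OF L] a by blast
    then obtain b where b: "b \<in> L" "s a = I ?f b" by blast
    have "w a = b" using w_def b permutes_inverses(2)[OF pI] by simp
    then show "y \<in> L" using a b by simp
  qed
  moreover have "w permutes {1..n}" using w_def permutes_compose[OF ps permutes_inv[OF pI]] by simp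
  ultimately have wW: "w \<in> W" unfolding Wh1_def by blast
  have "Phi (?f, w) = s" using Phi_eq w_def permutes_inv_o(1)[OF pI] by (simp add: o_assoc)
  moreover have "(?f, w) \<in> carrier S" using S_carrier f wW by simp
  ultimately show ?thesis by (metis image_eqI)
qed

lemma Phi_image: "Phi ` carrier S = stabU n p A"
proof
  show "Phi ` carrier S \<subseteq> stabU n p A" using Phi_stab Phi_eq S_carrier by auto
  show "stabU n p A \<subseteq> Phi ` carrier S" using Phi_surj by blast
qed

end

theorem proposition4p15:
  fixes n p :: nat and A :: "nat \<Rightarrow> nat \<Rightarrow> complex"
  assumes "n \<ge> 2" and "p \<ge> 1"
    and "\<forall>j \<in> {1..p}. A j \<in> tspace n"
  shows "group (aut_group n p A)
    \<and> iota n p A \<in> hom (aut_group n p A) (sym_group n)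
    \<and> inj_on (iota n p A) (tree_aut n p A)
    \<and> iota n p A ` tree_aut n p A \<subseteq> stabU n p A
    \<and> iota n p A ` tree_aut n p A \<inter> Wh1 n p A = {id}
    \<and> (\<forall>f \<in> tree_aut n p A.
         (\<lambda>w. iota n p A f \<circ> w \<circ> inv_into UNIV (iota n p A f)) ` Wh1 n p A = Wh1 n p A)
    \<and> group (semidirect n p A)
    \<and> semidirect_map n p A \<in> hom (semidirect n p A) (sym_group n)
    \<and> inj_on (semidirect_map n p A) (carrier (semidirect n p A))
    \<and> semidirect_map n p A ` carrier (semidirect n p A) = stabU n p A"
proof -
  interpret fs n p A using assms(1,2) by unfold_locales
  have sub: "I ` Aut \<subseteq> stabU n p A"
  proof
    fix s assume "s \<in> I ` Aut"
    then obtain f where f: "f \<in> Aut" "s = I f" by blast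
    show "s \<in> stabU n p A" using Phi_stab[OF f(1) wh_id] f(2) by simp
  qed
  show ?thesis
    using group_aut I_hom_group I_inj sub inter_trivial normalise group_S Phi_hom Phi_inj Phi_image
    by blast
qed

end
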